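(* Let $I\subset\mathbb{K}[x_1,\ldots,x_n]$ be a zero-dimensional ideal of degree $D$ in shape position, with Gröbner basis $G_1$ w.r.t. a term ordering $<_1$, multiplication matrix $T_1$ (assumed nonsingular) and $\mathbf{e}=(1,0,\ldots,0)^t\in\mathbb{K}^D$. Let $\mathbf{w}\in\mathbb{K}^D$, and let $\tilde f_1$ be the minimal polynomial, of degree $d$, of the scalar sequence $(\langle\mathbf{w},T_1^i\mathbf{e}\rangle)_{i=0}^{2D-1}$. Let $\tilde T_1$ be the multiplication matrix of $x_1$ for the ideal $I+\langle\tilde f_1\rangle$ w.r.t. $<_1$, and let $\tilde{\mathbf{e}}=(1,0,\ldots,0)^t\in\mathbb{K}^{d}$ be the coordinate vector of $1$ in $\mathbb{K}[x_1,\ldots,x_n]/(I+\langle\tilde f_1\rangle)$. Then $\tilde f_1$ is also the minimal polynomial of the vector sequence $[\tilde{\mathbf{e}},\tilde T_1\tilde{\mathbf{e}},\tilde T_1^2\tilde{\mathbf{e}},\ldots]$.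
   Context: Variables are ordered $x_1<\cdots<x_n$. For a zero-dimensional ideal $J$ with Gröbner basis w.r.t. $<_1$, let $B=[\epsilon_1,\ldots,\epsilon_m]$ be the canonical basis (standard monomials) of the quotient ring, ordered increasingly by $<_1$, so that $\epsilon_1=1$. The multiplication matrix of $x_i$ is the $m\times m$ matrix whose $j$-th column is the coordinate vector, in $B$, of the normal form of $\epsilon_j x_i$. $I$ is in shape position if its reduced Gröbner basis w.r.t. LEX is $[f_1(x_1),x_2-f_2(x_1),\ldots,x_n-f_n(x_1)]$; then $\deg f_1=D$. The minimal polynomial of a scalar linearly recurring sequence is the monic generator of its ideal of characteristic polynomials. The minimal polynomial of a vector sequence $(A^i\mathbf{v})_{i\ge0}$ is the monic polynomial $p$ of least degree with $p(A)\mathbf{v}=0$. *)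

theory Defs
  imports "HOL-Library.Poly_Mapping" "HOL-Computational_Algebra.Polynomial"
    "Jordan_Normal_Form.Determinant"
begin

text \<open>Multivariate polynomials over a field 'k in the variables of a finite
  linearly ordered type 'v (the variables x_1 < ... < x_n; x_1 is the least one).
  Monomials are exponent vectors.\<close>

type_synonym 'v monom = "'v \<Rightarrow>\<^sub>0 nat"
type_synonym ('v, 'k) mpoly = "'v monom \<Rightarrow>\<^sub>0 'k"

definition mvar :: "'v \<Rightarrow> ('v, 'k::comm_ring_1) mpoly" where
  "mvar v = Poly_Mapping.single (Poly_Mapping.single v 1) 1"

definition mmonom :: "'v monom \<Rightarrow> ('v, 'k::comm_ring_1) mpoly" where
  "mmonom m = Poly_Mapping.single m 1"

definition x1 :: "'v::{finite,linorder}" where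
  "x1 = Min (UNIV :: 'v set)"

definition in_x1 :: "'k::comm_ring_1 poly \<Rightarrow> ('v::{finite,linorder}, 'k) mpoly" where
  "in_x1 f = (\<Sum>k\<le>degree f. Poly_Mapping.single (Poly_Mapping.single x1 k) (coeff f k))"

definition is_ideal :: "('v, 'k::comm_ring_1) mpoly set \<Rightarrow> bool" where
  "is_ideal I \<longleftrightarrow> 0 \<in> I \<and> (\<forall>a\<in>I. \<forall>b\<in>I. a + b \<in> I) \<and> (\<forall>a\<in>I. \<forall>g. g * a \<in> I)"

definition ideal_gen :: "('v, 'k::comm_ring_1) mpoly set \<Rightarrow> ('v, 'k) mpoly set" where
  "ideal_gen S = {p. \<exists>F c. finite F \<and> F \<subseteq> S \<and> p = (\<Sum>s\<in>F. c s * s)}"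

definition ideal_plus :: "('v, 'k::comm_ring_1) mpoly set \<Rightarrow> ('v, 'k) mpoly \<Rightarrow> ('v, 'k) mpoly set" where
  "ideal_plus I g = {a + h * g | a h. a \<in> I}"

definition term_order :: "('v monom \<Rightarrow> 'v monom \<Rightarrow> bool) \<Rightarrow> bool" where
  "term_order lt \<longleftrightarrow>
     (\<forall>m. \<not> lt m m) \<and>
     (\<forall>a b c. lt a b \<longrightarrow> lt b c \<longrightarrow> lt a c) \<and>
     (\<forall>a b. a \<noteq> b \<longrightarrow> lt a b \<or> lt b a) \<and>
     (\<forall>m. m \<noteq> 0 \<longrightarrow> lt 0 m) \<and>
     (\<forall>a b u. lt a b \<longrightarrow> lt (a + u) (b + u))"

definition lmon :: "('v monom \<Rightarrow> 'v monom \<Rightarrow> bool) \<Rightarrow> ('v, 'k::zero) mpoly \<Rightarrow> 'v monom" where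
  "lmon lt p = (THE m. m \<in> Poly_Mapping.keys p \<and> (\<forall>m'\<in>Poly_Mapping.keys p. m' = m \<or> lt m' m))"

definition std_monoms :: "('v monom \<Rightarrow> 'v monom \<Rightarrow> bool) \<Rightarrow> ('v, 'k::zero) mpoly set \<Rightarrow> 'v monom set" where
  "std_monoms lt I = {m. \<not> (\<exists>p\<in>I. p \<noteq> 0 \<and> lmon lt p = m)}"

definition std_basis :: "('v monom \<Rightarrow> 'v monom \<Rightarrow> bool) \<Rightarrow> ('v, 'k::zero) mpoly set \<Rightarrow> 'v monom list" where
  "std_basis lt I = (THE xs. set xs = std_monoms lt I \<and> sorted_wrt lt xs)"

definition normal_form :: "('v monom \<Rightarrow> 'v monom \<Rightarrow> bool) \<Rightarrow> ('v, 'k::comm_ring_1) mpoly set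
    \<Rightarrow> ('v, 'k) mpoly \<Rightarrow> ('v, 'k) mpoly" where
  "normal_form lt I p = (THE q. Poly_Mapping.keys q \<subseteq> std_monoms lt I \<and> p - q \<in> I)"

definition coord_vec :: "('v monom \<Rightarrow> 'v monom \<Rightarrow> bool) \<Rightarrow> ('v, 'k::comm_ring_1) mpoly set
    \<Rightarrow> ('v, 'k) mpoly \<Rightarrow> 'k vec" where
  "coord_vec lt I p = (let B = std_basis lt I; q = normal_form lt I p in
      vec (length B) (\<lambda>i. Poly_Mapping.lookup q (B ! i)))"

definition mult_matrix :: "('v monom \<Rightarrow> 'v monom \<Rightarrow> bool) \<Rightarrow> ('v, 'k::comm_ring_1) mpoly set
    \<Rightarrow> 'v \<Rightarrow> 'k mat" where
  "mult_matrix lt I v = (let B = std_basis lt I in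
      mat (length B) (length B)
        (\<lambda>(i, j). Poly_Mapping.lookup (normal_form lt I (mmonom (B ! j) * mvar v)) (B ! i)))"

definition zero_dimensional :: "('v monom \<Rightarrow> 'v monom \<Rightarrow> bool) \<Rightarrow> ('v, 'k::comm_ring_1) mpoly set \<Rightarrow> bool" where
  "zero_dimensional lt I \<longleftrightarrow> is_ideal I \<and> 1 \<notin> I \<and> finite (std_monoms lt I)"

text \<open>Shape position: the reduced LEX Groebner basis (x_1 < ... < x_n) is
  [f_1(x_1), x_2 - f_2(x_1), ..., x_n - f_n(x_1)]; written out: I is generated by
  these polynomials, f_1 is monic and the f_i (i >= 2) are reduced modulo f_1.\<close>
definition shape_position :: "('v::{finite,linorder}, 'k::field) mpoly set \<Rightarrow> bool" where
  "shape_position I \<longleftrightarrow> (\<exists>f1 (fs :: 'v \<Rightarrow> 'k poly).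
      lead_coeff f1 = 1 \<and> (\<forall>v. v \<noteq> x1 \<longrightarrow> degree (fs v) < degree f1) \<and>
      I = ideal_gen (insert (in_x1 f1) {mvar v - in_x1 (fs v) | v. v \<noteq> x1}))"

definition char_poly_seq :: "'k::field poly \<Rightarrow> (nat \<Rightarrow> 'k) \<Rightarrow> bool" where
  "char_poly_seq q s \<longleftrightarrow> (\<forall>i. (\<Sum>k\<le>degree q. coeff q k * s (i + k)) = 0)"

definition is_min_poly_seq :: "(nat \<Rightarrow> 'k::field) \<Rightarrow> 'k poly \<Rightarrow> bool" where
  "is_min_poly_seq s p \<longleftrightarrow> lead_coeff p = 1 \<and> (\<forall>q. char_poly_seq q s \<longleftrightarrow> p dvd q)"

definition poly_mat_vec :: "'k::field poly \<Rightarrow> 'k mat \<Rightarrow> 'k vec \<Rightarrow> 'k vec" where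
  "poly_mat_vec p A v = vec (dim_vec v)
      (\<lambda>i. \<Sum>k\<le>degree p. coeff p k * (((A ^\<^sub>m k) *\<^sub>v v) $ i))"

definition is_min_poly_vec :: "'k::field mat \<Rightarrow> 'k vec \<Rightarrow> 'k poly \<Rightarrow> bool" where
  "is_min_poly_vec A v p \<longleftrightarrow> lead_coeff p = 1 \<and> poly_mat_vec p A v = 0\<^sub>v (dim_vec v) \<and>
     (\<forall>q. lead_coeff q = 1 \<longrightarrow> poly_mat_vec q A v = 0\<^sub>v (dim_vec v) \<longrightarrow> degree p \<le> degree q)"

end

theory Submission
  imports Defs
begin


lemma to_irrefl: "term_order lt \<Longrightarrow> \<not> lt m m" by (simp add: term_order_def)
lemma to_trans: "term_order lt \<Longrightarrow> lt a b \<Longrightarrow> lt b c \<Longrightarrow> lt a c" unfolding term_order_def by blast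
lemma to_total: "term_order lt \<Longrightarrow> a \<noteq> b \<Longrightarrow> lt a b \<or> lt b a" unfolding term_order_def by blast
lemma to_zero: "term_order lt \<Longrightarrow> m \<noteq> 0 \<Longrightarrow> lt 0 m" unfolding term_order_def by blast
lemma to_add: "term_order lt \<Longrightarrow> lt a b \<Longrightarrow> lt (a + u) (b + u)" unfolding term_order_def by blast
lemma to_asym: "term_order lt \<Longrightarrow> lt a b \<Longrightarrow> \<not> lt b a" using to_trans[of lt a b a] to_irrefl[of lt a] by blast

lemma lookup_scal: "Poly_Mapping.lookup (Poly_Mapping.single 0 c * p) m = c * Poly_Mapping.lookup p m"
  by (simp flip: mult_map_scale_conv_mult, transfer, simp add: when_def)

lemma max_exists:
  assumes "term_order lt" "finite A" "A \<noteq> {}"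
  shows "\<exists>m\<in>A. \<forall>x\<in>A. x = m \<or> lt x m"
  using assms(2,3)
proof (induction A rule: finite_ne_induct)
  case (singleton x) then show ?case by auto
next
  case (insert x F)
  then obtain m where m1: "m\<in>F" and m2: "\<And>y. y\<in>F \<Longrightarrow> y = m \<or> lt y m" by blast
  show ?case
  proof (cases "lt x m")
    case True
    have "\<forall>y\<in>insert x F. y = m \<or> lt y m" using m2 True by auto
    then show ?thesis using m1 by blast
  next
    case False
    then have xm: "x = m \<or> lt m x" using to_total[OF assms(1), of x m] by blast
    have "\<forall>y\<in>insert x F. y = x \<or> lt y x"
    proof
      fix y assume y: "y \<in> insert x F"
      show "y = x \<or> lt y x"
      proof (cases "y = x")
        case False
        then have "y \<in> F" using y by simp
        then have "y = m \<or> lt y m" using m2 by blast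
        then show ?thesis using xm to_trans[OF assms(1), of y m x] by blast
      qed simp
    qed
    then show ?thesis by blast
  qed
qed

lemma lmon_prop:
  assumes "term_order lt" "p \<noteq> 0"
  shows "lmon lt p \<in> Poly_Mapping.keys p \<and> (\<forall>m'\<in>Poly_Mapping.keys p. m' = lmon lt p \<or> lt m' (lmon lt p))"
proof -
  have ne: "Poly_Mapping.keys p \<noteq> {}" using assms(2) by simp
  obtain m where m: "m \<in> Poly_Mapping.keys p" "\<forall>m'\<in>Poly_Mapping.keys p. m' = m \<or> lt m' m"
    using max_exists[OF assms(1) finite_keys ne] by blast
  have "lmon lt p = m" unfolding lmon_def
  proof (rule the_equality)
    show "m \<in> Poly_Mapping.keys p \<and> (\<forall>m'\<in>Poly_Mapping.keys p. m' = m \<or> lt m' m)" using m by blast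
  next
    fix n assume n: "n \<in> Poly_Mapping.keys p \<and> (\<forall>m'\<in>Poly_Mapping.keys p. m' = n \<or> lt m' n)"
    have 1: "m = n \<or> lt m n" using n m(1) by blast
    have 2: "n = m \<or> lt n m" using n m(2) by blast
    show "n = m"
    proof (rule ccontr)
      assume "n \<noteq> m"
      then have "lt m n" "lt n m" using 1 2 by auto
      then show False using to_asym[OF assms(1)] by blast
    qed
  qed
  then show ?thesis using m by simp
qed

lemma nat_seq_mono_sub:
  fixes s :: "nat \<Rightarrow> nat"
  shows "\<exists>f. strict_mono f \<and> (\<forall>n. s (f n) \<le> s (f (Suc n)))"
proof -
  obtain g where g: "strict_mono g" "monoseq (\<lambda>n. s (g n))" using seq_monosub by blast
  show ?thesis
  proof (cases "\<forall>m n. m \<le> n \<longrightarrow> s (g m) \<le> s (g n)")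
    case True then show ?thesis using g(1) by (intro exI[of _ g]) simp
  next
    case False
    then have dec: "\<forall>m n. m \<le> n \<longrightarrow> s (g n) \<le> s (g m)" using g(2) unfolding monoseq_def by blast
    define v where "v = (LEAST v. \<exists>n. s (g n) = v)"
    have "\<exists>n. s (g n) = v" unfolding v_def by (rule LeastI_ex) blast
    then obtain N where N: "s (g N) = v" by blast
    have mn: "v \<le> s (g n)" for n unfolding v_def by (rule Least_le) blast
    have eq: "s (g n) = v" if "N \<le> n" for n
      using dec[rule_format, OF that] mn[of n] N by simp
    have "strict_mono (\<lambda>n. g (N + n))" using g(1) unfolding strict_mono_def by simp
    moreover have "\<forall>n. s (g (N + n)) \<le> s (g (N + Suc n))" using eq by simp
    ultimately show ?thesis by blast
  qed
qed

lemma dickson_seq: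
  fixes m :: "nat \<Rightarrow> ('v \<Rightarrow>\<^sub>0 nat)"
  assumes "finite V"
  shows "\<exists>f. strict_mono f \<and> (\<forall>v\<in>V. \<forall>n. Poly_Mapping.lookup (m (f n)) v \<le> Poly_Mapping.lookup (m (f (Suc n))) v)"
  using assms
proof (induction V rule: finite_induct)
  case empty
  have "strict_mono (\<lambda>n::nat. n)" by (simp add: strict_mono_def)
  then show ?case by blast
next
  case (insert x F)
  then obtain f where f: "strict_mono f" "\<forall>v\<in>F. \<forall>n. Poly_Mapping.lookup (m (f n)) v \<le> Poly_Mapping.lookup (m (f (Suc n))) v" by blast
  obtain g where g: "strict_mono g" "\<forall>n. Poly_Mapping.lookup (m (f (g n))) x \<le> Poly_Mapping.lookup (m (f (g (Suc n)))) x"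
    using nat_seq_mono_sub[of "\<lambda>n. Poly_Mapping.lookup (m (f n)) x"] by blast
  have "strict_mono (f \<circ> g)" using f(1) g(1) by (simp add: strict_mono_def)
  moreover have "Poly_Mapping.lookup (m (f (g n))) v \<le> Poly_Mapping.lookup (m (f (g (Suc n)))) v" if "v \<in> F" for v n
  proof -
    have "g n \<le> g (Suc n)" using g(1) by (simp add: strict_mono_leD)
    show ?thesis
      by (rule lift_Suc_mono_le[where f="\<lambda>n. Poly_Mapping.lookup (m (f n)) v", OF _ \<open>g n \<le> g (Suc n)\<close>])
        (use f(2) that in auto)
  qed
  ultimately show ?case apply (intro exI[of _ "f \<circ> g"]) using g(2) by (auto simp: comp_def)
qed

lemma to_wf:
  fixes lt :: "('v::finite) monom \<Rightarrow> 'v monom \<Rightarrow> bool"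
  assumes "term_order lt"
  shows "wf {(a, b). lt a b}"
proof -
  have "\<not> (\<exists>m. \<forall>i. lt (m (Suc i)) (m i))"
  proof
    assume "\<exists>m. \<forall>i. lt (m (Suc i)) (m i)"
    then obtain m where m: "\<forall>i. lt (m (Suc i)) (m i)" by blast
    obtain f where f: "strict_mono f" "\<forall>v\<in>UNIV. \<forall>n. Poly_Mapping.lookup (m (f n)) v \<le> Poly_Mapping.lookup (m (f (Suc n))) v"
      using dickson_seq[of "UNIV :: 'v set" m] by auto
    have chain: "lt (m j) (m i)" if "i < j" for i j
      using that
    proof (induction j)
      case 0 then show ?case by simp
    next
      case (Suc j)
      show ?case
      proof (cases "i = j")
        case True then show ?thesis using m by simp
      next
        case False
        then have "lt (m j) (m i)" using Suc by simp
        then show ?thesis using m[rule_format, of j] to_trans[OF assms] by blast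
      qed
    qed
    have "f 0 < f 1" using f(1) by (simp add: strict_mono_def)
    then have l1: "lt (m (f 1)) (m (f 0))" using chain by blast
    define u where "u = m (f 1) - m (f 0)"
    have eqm: "m (f 1) = m (f 0) + u"
      unfolding u_def using f(2) by (intro poly_mapping_eqI) (simp add: lookup_add lookup_minus)
    show False
    proof (cases "u = 0")
      case True then show ?thesis using l1 eqm to_irrefl[OF assms] by simp
    next
      case False
      then have "lt (0 + m (f 0)) (u + m (f 0))" using to_add[OF assms to_zero[OF assms False], of "m (f 0)"] by simp
      then have "lt (m (f 0)) (m (f 1))" using eqm by (simp add: add.commute)
      then show ?thesis using l1 to_asym[OF assms] by blast
    qed
  qed
  then show ?thesis unfolding wf_iff_no_infinite_down_chain by simp
qed



lemma ideal_add: "is_ideal K \<Longrightarrow> a \<in> K \<Longrightarrow> b \<in> K \<Longrightarrow> a + b \<in> K" unfolding is_ideal_def by blast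
lemma ideal_zero: "is_ideal K \<Longrightarrow> 0 \<in> K" unfolding is_ideal_def by blast
lemma ideal_multl: "is_ideal K \<Longrightarrow> a \<in> K \<Longrightarrow> g * a \<in> K" unfolding is_ideal_def by blast
lemma ideal_multr: "is_ideal K \<Longrightarrow> a \<in> K \<Longrightarrow> a * g \<in> K" using ideal_multl[of K a g] by (simp add: mult.commute)
lemma ideal_uminus: "is_ideal K \<Longrightarrow> a \<in> K \<Longrightarrow> - a \<in> K" using ideal_multl[of K a "-1"] by simp
lemma ideal_diff: "is_ideal K \<Longrightarrow> a \<in> K \<Longrightarrow> b \<in> K \<Longrightarrow> a - b \<in> K"
  using ideal_add[of K a "-b"] ideal_uminus[of K b] by simp
lemma ideal_sum: assumes "is_ideal K" "finite F" "\<And>x. x \<in> F \<Longrightarrow> f x \<in> K" shows "sum f F \<in> K"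
  using assms(2,3)
proof (induction F rule: finite_induct)
  case empty then show ?case using ideal_zero[OF assms(1)] by simp
next
  case (insert x F) then show ?case using ideal_add[OF assms(1), of "f x" "sum f F"] by simp
qed

lemma poly_decomp: "p = (\<Sum>m\<in>Poly_Mapping.keys p. Poly_Mapping.single m (Poly_Mapping.lookup p m))"
proof (rule poly_mapping_eqI)
  fix k
  have "(\<Sum>m\<in>Poly_Mapping.keys p. Poly_Mapping.lookup (Poly_Mapping.single m (Poly_Mapping.lookup p m)) k)
      = (\<Sum>m\<in>Poly_Mapping.keys p. if m = k then Poly_Mapping.lookup p m else 0)"
    by (rule sum.cong) (auto simp: lookup_single when_def)
  also have "\<dots> = Poly_Mapping.lookup p k" by (simp add: in_keys_iff)
  finally show "Poly_Mapping.lookup p k = Poly_Mapping.lookup (\<Sum>m\<in>Poly_Mapping.keys p. Poly_Mapping.single m (Poly_Mapping.lookup p m)) k"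
    by (simp add: lookup_sum)
qed

lemma single_scal: "Poly_Mapping.single m c = Poly_Mapping.single 0 c * (Poly_Mapping.single m 1 :: ('a::comm_monoid_add \<Rightarrow>\<^sub>0 'b::semiring_1))"
  by (simp add: mult_single)

lemma keys_scal: "Poly_Mapping.keys (Poly_Mapping.single 0 c * p) \<subseteq> Poly_Mapping.keys p"
  by (auto simp: in_keys_iff lookup_scal)

lemma keys_add_sub: "Poly_Mapping.keys (p + q) \<subseteq> Poly_Mapping.keys p \<union> Poly_Mapping.keys q"
  by (auto simp: in_keys_iff lookup_add)

lemma keys_diff_sub: "Poly_Mapping.keys (p - q) \<subseteq> Poly_Mapping.keys p \<union> Poly_Mapping.keys (q::'a \<Rightarrow>\<^sub>0 'b::ab_group_add)"
  by (auto simp: in_keys_iff lookup_minus)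

lemma scal_mult_assoc: "Poly_Mapping.single 0 c * p * q = Poly_Mapping.single 0 c * (p * q)"
  by (simp add: mult.assoc)

context
  fixes lt :: "('v::{finite,linorder}) monom \<Rightarrow> 'v monom \<Rightarrow> bool"
    and K :: "('v, 'k::field) mpoly set"
  assumes TO: "term_order lt" and ID: "is_ideal K"
begin

lemma nf_unique:
  assumes "Poly_Mapping.keys q1 \<subseteq> std_monoms lt K" "Poly_Mapping.keys q2 \<subseteq> std_monoms lt K"
    "p - q1 \<in> K" "p - q2 \<in> K"
  shows "q1 = q2"
proof (rule ccontr)
  assume ne: "q1 \<noteq> q2"
  define r where "r = q1 - q2"
  have rK: "r \<in> K" using ideal_diff[OF ID assms(4) assms(3)] unfolding r_def by (simp add: algebra_simps)
  have r0: "r \<noteq> 0" using ne unfolding r_def by simp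
  have "lmon lt r \<in> Poly_Mapping.keys r" using lmon_prop[OF TO r0] by blast
  then have "lmon lt r \<in> std_monoms lt K" using keys_diff_sub[of q1 q2] assms(1,2) unfolding r_def by blast
  then show False using rK r0 unfolding std_monoms_def by blast
qed

definition rep :: "('v, 'k) mpoly set" where
  "rep = {p. \<exists>q. Poly_Mapping.keys q \<subseteq> std_monoms lt K \<and> p - q \<in> K}"

lemma rep_add: "a \<in> rep \<Longrightarrow> b \<in> rep \<Longrightarrow> a + b \<in> rep"
proof -
  assume "a \<in> rep" "b \<in> rep"
  then obtain qa qb where "Poly_Mapping.keys qa \<subseteq> std_monoms lt K" "a - qa \<in> K"
    "Poly_Mapping.keys qb \<subseteq> std_monoms lt K" "b - qb \<in> K" unfolding rep_def by blast
  then show "a + b \<in> rep" unfolding rep_def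
    using keys_add_sub[of qa qb] ideal_add[OF ID, of "a - qa" "b - qb"]
    by (intro CollectI exI[of _ "qa + qb"]) (auto simp: algebra_simps)
qed

lemma rep_scal: "a \<in> rep \<Longrightarrow> Poly_Mapping.single 0 c * a \<in> rep"
proof -
  assume "a \<in> rep"
  then obtain qa where "Poly_Mapping.keys qa \<subseteq> std_monoms lt K" "a - qa \<in> K" unfolding rep_def by blast
  then show ?thesis unfolding rep_def
    using keys_scal[of c qa] ideal_multl[OF ID, of "a - qa" "Poly_Mapping.single 0 c"]
    by (intro CollectI exI[of _ "Poly_Mapping.single 0 c * qa"]) (auto simp: algebra_simps)
qed

lemma rep_K: "a \<in> K \<Longrightarrow> a \<in> rep"
  unfolding rep_def by (intro CollectI exI[of _ 0]) simp

lemma rep_sum: "finite F \<Longrightarrow> (\<And>x. x \<in> F \<Longrightarrow> f x \<in> rep) \<Longrightarrow> sum f F \<in> rep"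
proof (induction F rule: finite_induct)
  case empty then show ?case using rep_K ideal_zero[OF ID] by simp
next
  case (insert x F) then show ?case using rep_add by simp
qed

lemma rep_monom: "Poly_Mapping.single m 1 \<in> rep"
proof (induction m rule: wf_induct_rule[OF to_wf[OF TO]])
  case (1 m)
  show ?case
  proof (cases "m \<in> std_monoms lt K")
    case True
    then show ?thesis unfolding rep_def by (intro CollectI exI[of _ "Poly_Mapping.single m 1"]) (auto simp: ideal_zero[OF ID])
  next
    case False
    then obtain g where g: "g \<in> K" "g \<noteq> 0" "lmon lt g = m" unfolding std_monoms_def by blast
    have gm: "m \<in> Poly_Mapping.keys g" and gl: "\<And>m'. m' \<in> Poly_Mapping.keys g \<Longrightarrow> m' = m \<or> lt m' m"
      using lmon_prop[OF TO g(2)] g(3) by auto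
    define c where "c = Poly_Mapping.lookup g m"
    have c0: "c \<noteq> 0" using gm unfolding c_def by (simp add: in_keys_iff)
    define h where "h = Poly_Mapping.single 0 (1 / c) * g"
    have hK: "h \<in> K" unfolding h_def using ideal_multl[OF ID g(1)] .
    define r where "r = Poly_Mapping.single m 1 - h"
    have hm: "Poly_Mapping.lookup h m = 1" unfolding h_def using c0 by (simp add: lookup_scal c_def)
    have rk: "lt m' m" if "m' \<in> Poly_Mapping.keys r" for m'
    proof -
      have "m' \<noteq> m" using that hm unfolding r_def by (auto simp: in_keys_iff lookup_minus)
      moreover have "m' \<in> Poly_Mapping.keys h" using that \<open>m' \<noteq> m\<close> unfolding r_def
        by (auto simp: in_keys_iff lookup_minus lookup_single when_def)
      then have "m' \<in> Poly_Mapping.keys g" using keys_scal unfolding h_def by blast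
      ultimately show ?thesis using gl by blast
    qed
    have "r = (\<Sum>m'\<in>Poly_Mapping.keys r. Poly_Mapping.single 0 (Poly_Mapping.lookup r m') * Poly_Mapping.single m' 1)"
      using poly_decomp[of r] by (simp add: mult_single)
    also have "\<dots> \<in> rep"
      using rk 1 by (intro rep_sum rep_scal) auto
    finally have "r \<in> rep" .
    then have "r + h \<in> rep" using rep_add rep_K hK by blast
    then show ?thesis unfolding r_def by simp
  qed
qed

lemma rep_all: "p \<in> rep"
proof -
  have "p = (\<Sum>m\<in>Poly_Mapping.keys p. Poly_Mapping.single 0 (Poly_Mapping.lookup p m) * Poly_Mapping.single m 1)"
    using poly_decomp[of p] by (simp add: mult_single)
  also have "\<dots> \<in> rep" using rep_monom by (intro rep_sum rep_scal) auto
  finally show ?thesis .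
qed

lemma nf_prop: "Poly_Mapping.keys (normal_form lt K p) \<subseteq> std_monoms lt K \<and> p - normal_form lt K p \<in> K"
proof -
  obtain q where q: "Poly_Mapping.keys q \<subseteq> std_monoms lt K" "p - q \<in> K" using rep_all[of p] unfolding rep_def by blast
  show ?thesis unfolding normal_form_def
  proof (rule theI[of _ q])
    show "Poly_Mapping.keys q \<subseteq> std_monoms lt K \<and> p - q \<in> K" using q by blast
  next
    fix x assume "Poly_Mapping.keys x \<subseteq> std_monoms lt K \<and> p - x \<in> K"
    then show "x = q" using nf_unique[of x q p] q by blast
  qed
qed

lemma nf_eqI: "Poly_Mapping.keys q \<subseteq> std_monoms lt K \<Longrightarrow> p - q \<in> K \<Longrightarrow> normal_form lt K p = q"
proof -
  assume a: "Poly_Mapping.keys q \<subseteq> std_monoms lt K" "p - q \<in> K"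
  have b: "Poly_Mapping.keys (normal_form lt K p) \<subseteq> std_monoms lt K" "p - normal_form lt K p \<in> K"
    using nf_prop[of p] by auto
  show ?thesis using nf_unique[OF b(1) a(1) b(2) a(2)] .
qed

lemma nf_keys: "Poly_Mapping.keys (normal_form lt K p) \<subseteq> std_monoms lt K"
  using nf_prop by blast
lemma nf_diff: "p - normal_form lt K p \<in> K"
  using nf_prop by blast

lemma nf_add: "normal_form lt K (a + b) = normal_form lt K a + normal_form lt K b"
proof (rule nf_eqI)
  show "Poly_Mapping.keys (normal_form lt K a + normal_form lt K b) \<subseteq> std_monoms lt K"
    using keys_add_sub[of "normal_form lt K a" "normal_form lt K b"] nf_keys[of a] nf_keys[of b] by blast
  have "a + b - (normal_form lt K a + normal_form lt K b) = (a - normal_form lt K a) + (b - normal_form lt K b)"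
    by (simp add: algebra_simps)
  then show "a + b - (normal_form lt K a + normal_form lt K b) \<in> K"
    using ideal_add[OF ID nf_diff[of a] nf_diff[of b]] by (simp only:)
qed

lemma nf_scal: "normal_form lt K (Poly_Mapping.single 0 c * a) = Poly_Mapping.single 0 c * normal_form lt K a"
proof (rule nf_eqI)
  show "Poly_Mapping.keys (Poly_Mapping.single 0 c * normal_form lt K a) \<subseteq> std_monoms lt K"
    using keys_scal[of c "normal_form lt K a"] nf_keys[of a] by blast
  have "Poly_Mapping.single 0 c * a - Poly_Mapping.single 0 c * normal_form lt K a
     = Poly_Mapping.single 0 c * (a - normal_form lt K a)"
    by (simp add: algebra_simps)
  then show "Poly_Mapping.single 0 c * a - Poly_Mapping.single 0 c * normal_form lt K a \<in> K"
    using ideal_multl[OF ID nf_diff[of a], of "Poly_Mapping.single 0 c"] by (simp only:)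
qed

lemma nf_zero: "normal_form lt K 0 = 0"
  by (rule nf_eqI) (auto simp: ideal_zero[OF ID])

lemma nf_sum: "finite F \<Longrightarrow> normal_form lt K (sum f F) = (\<Sum>x\<in>F. normal_form lt K (f x))"
  by (induction F rule: finite_induct) (auto simp: nf_zero nf_add)

lemma nf_cong: "a - b \<in> K \<Longrightarrow> normal_form lt K a = normal_form lt K b"
proof (rule nf_eqI)
  assume "a - b \<in> K"
  show "Poly_Mapping.keys (normal_form lt K b) \<subseteq> std_monoms lt K" using nf_keys by blast
  have "a - normal_form lt K b = (a - b) + (b - normal_form lt K b)" by simp
  then show "a - normal_form lt K b \<in> K"
    using ideal_add[OF ID \<open>a - b \<in> K\<close> nf_diff[of b]] by (simp only:)
qed

lemma nf_zero_iff: "normal_form lt K p = 0 \<longleftrightarrow> p \<in> K"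
proof
  assume "normal_form lt K p = 0" then show "p \<in> K" using nf_diff[of p] by simp
next
  assume "p \<in> K" then show "normal_form lt K p = 0" using nf_eqI[of 0 p] by simp
qed

lemma lookup_nf_lin: "finite F \<Longrightarrow> Poly_Mapping.lookup (normal_form lt K (\<Sum>x\<in>F. Poly_Mapping.single 0 (c x) * P x)) m
   = (\<Sum>x\<in>F. c x * Poly_Mapping.lookup (normal_form lt K (P x)) m)"
  by (simp add: nf_sum nf_scal lookup_sum lookup_scal)

end



lemma sorted_exists:
  assumes TO: "term_order lt" and "finite A"
  shows "\<exists>xs. set xs = A \<and> sorted_wrt lt xs"
  using assms(2)
proof (induction A rule: finite_remove_induct)
  case empty then show ?case by (intro exI[of _ "[]"]) simp
next
  case (remove A)
  obtain m where m: "m \<in> A" "\<forall>x\<in>A. x = m \<or> lt x m" using max_exists[OF TO remove(1,2)] by blast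
  obtain xs where xs: "set xs = A - {m}" "sorted_wrt lt xs" using remove(4)[OF m(1)] by blast
  have "set (xs @ [m]) = A" using xs(1) m(1) by auto
  moreover have "sorted_wrt lt (xs @ [m])"
    unfolding sorted_wrt_append using xs m by auto
  ultimately show ?case by blast
qed

lemma sorted_unique:
  assumes TO: "term_order lt"
  shows "sorted_wrt lt xs \<Longrightarrow> sorted_wrt lt ys \<Longrightarrow> set xs = set ys \<Longrightarrow> xs = ys"
proof (induction xs arbitrary: ys)
  case Nil then show ?case by simp
next
  case (Cons x xs)
  then obtain y ys' where ys: "ys = y # ys'" by (cases ys) auto
  have xy: "x = y"
  proof (rule ccontr)
    assume ne: "x \<noteq> y"
    have "y \<in> set xs" using Cons(4) ys ne by auto
    then have 1: "lt x y" using Cons(2) by simp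
    have "x \<in> set ys'" using Cons(4) ys ne by auto
    then have 2: "lt y x" using Cons(3) ys by simp
    show False using to_asym[OF TO 1] 2 by blast
  qed
  have nx: "x \<notin> set xs" using Cons(2) to_irrefl[OF TO] by auto
  have ny: "y \<notin> set ys'" using Cons(3) ys to_irrefl[OF TO] by auto
  have "set xs = set ys'"
  proof -
    have "set xs = set (x # xs) - {x}" using nx by auto
    also have "\<dots> = set ys - {y}" using Cons(4) xy by simp
    also have "\<dots> = set ys'" using ny ys by auto
    finally show ?thesis .
  qed
  then have "xs = ys'" using Cons ys by simp
  then show ?case using xy ys by simp
qed

lemma sorted_distinct:
  assumes TO: "term_order lt"
  shows "sorted_wrt lt xs \<Longrightarrow> distinct xs"
  by (induction xs) (auto simp: to_irrefl[OF TO])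

context
  fixes lt :: "('v::{finite,linorder}) monom \<Rightarrow> 'v monom \<Rightarrow> bool"
    and K :: "('v, 'k::field) mpoly set"
  assumes TO: "term_order lt" and ID: "is_ideal K" and FIN: "finite (std_monoms lt K)"
begin

lemma sb_prop: "set (std_basis lt K) = std_monoms lt K \<and> sorted_wrt lt (std_basis lt K)"
proof -
  obtain xs where xs: "set xs = std_monoms lt K" "sorted_wrt lt xs" using sorted_exists[OF TO FIN] by blast
  show ?thesis unfolding std_basis_def
  proof (rule theI[of _ xs])
    show "set xs = std_monoms lt K \<and> sorted_wrt lt xs" using xs by blast
  next
    fix ys assume "set ys = std_monoms lt K \<and> sorted_wrt lt ys"
    then show "ys = xs" using sorted_unique[OF TO, of ys xs] xs by simp
  qed
qed

lemma sb_set: "set (std_basis lt K) = std_monoms lt K" using sb_prop by blast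
lemma sb_sorted: "sorted_wrt lt (std_basis lt K)" using sb_prop by blast
lemma sb_distinct: "distinct (std_basis lt K)" using sorted_distinct[OF TO sb_sorted] .
lemma sb_length: "length (std_basis lt K) = card (std_monoms lt K)"
  using distinct_card[OF sb_distinct] sb_set by simp

lemma sum_set_sb: "(\<Sum>m\<in>std_monoms lt K. f m) = (\<Sum>i<length (std_basis lt K). f (std_basis lt K ! i))"
proof -
  have "(\<Sum>m\<in>std_monoms lt K. f m) = (\<Sum>m\<in>set (std_basis lt K). f m)" using sb_set by simp
  also have "\<dots> = sum_list (map f (std_basis lt K))" by (rule sum_list_distinct_conv_sum_set[OF sb_distinct, symmetric])
  also have "\<dots> = (\<Sum>i<length (std_basis lt K). f (std_basis lt K ! i))"
    by (simp add: sum_list_sum_nth atLeast0LessThan)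
  finally show ?thesis .
qed

lemma nf_basis: "normal_form lt K p = (\<Sum>i<length (std_basis lt K).
    Poly_Mapping.single 0 (Poly_Mapping.lookup (normal_form lt K p) (std_basis lt K ! i)) * Poly_Mapping.single (std_basis lt K ! i) 1)"
proof -
  let ?q = "normal_form lt K p"
  have "?q = (\<Sum>m\<in>Poly_Mapping.keys ?q. Poly_Mapping.single 0 (Poly_Mapping.lookup ?q m) * Poly_Mapping.single m 1)"
    using poly_decomp[of ?q] by (simp add: mult_single)
  also have "\<dots> = (\<Sum>m\<in>std_monoms lt K. Poly_Mapping.single 0 (Poly_Mapping.lookup ?q m) * Poly_Mapping.single m 1)"
    by (rule sum.mono_neutral_left) (use FIN nf_keys[OF TO ID, of p] in \<open>auto simp: in_keys_iff\<close>)
  also have "\<dots> = (\<Sum>i<length (std_basis lt K).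
    Poly_Mapping.single 0 (Poly_Mapping.lookup (normal_form lt K p) (std_basis lt K ! i)) * Poly_Mapping.single (std_basis lt K ! i) 1)"
    by (rule sum_set_sb)
  finally show ?thesis .
qed

lemma cv_dim: "dim_vec (coord_vec lt K p) = length (std_basis lt K)"
  unfolding coord_vec_def by (simp add: Let_def)

lemma cv_idx: "i < length (std_basis lt K) \<Longrightarrow> coord_vec lt K p $ i = Poly_Mapping.lookup (normal_form lt K p) (std_basis lt K ! i)"
  unfolding coord_vec_def by (simp add: Let_def)

lemma cv_carrier: "coord_vec lt K p \<in> carrier_vec (length (std_basis lt K))"
  unfolding carrier_vec_def using cv_dim by simp

lemma cv_zero_iff: "coord_vec lt K p = 0\<^sub>v (length (std_basis lt K)) \<longleftrightarrow> p \<in> K"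
proof
  assume z: "coord_vec lt K p = 0\<^sub>v (length (std_basis lt K))"
  have "Poly_Mapping.keys (normal_form lt K p) = {}"
  proof (rule ccontr)
    assume "Poly_Mapping.keys (normal_form lt K p) \<noteq> {}"
    then obtain m where m: "m \<in> Poly_Mapping.keys (normal_form lt K p)" by blast
    then have "m \<in> set (std_basis lt K)" using nf_keys[OF TO ID, of p] sb_set by blast
    then obtain i where i: "i < length (std_basis lt K)" "std_basis lt K ! i = m" by (auto simp: in_set_conv_nth)
    have "coord_vec lt K p $ i = 0" using z i by simp
    then show False using cv_idx[OF i(1)] i m by (simp add: in_keys_iff)
  qed
  then show "p \<in> K" using nf_zero_iff[OF TO ID] by simp
next
  assume "p \<in> K"
  then have "normal_form lt K p = 0" using nf_zero_iff[OF TO ID] by simp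
  then show "coord_vec lt K p = 0\<^sub>v (length (std_basis lt K))"
    by (intro eq_vecI) (simp_all add: cv_idx cv_dim)
qed

lemma mm_carrier: "mult_matrix lt K v \<in> carrier_mat (length (std_basis lt K)) (length (std_basis lt K))"
  unfolding mult_matrix_def by (simp add: Let_def)

lemma mm_dim_row: "dim_row (mult_matrix lt K v) = length (std_basis lt K)"
  unfolding mult_matrix_def by (simp add: Let_def)

lemma mm_mult: "mult_matrix lt K v *\<^sub>v coord_vec lt K p = coord_vec lt K (p * mvar v)"
proof (rule eq_vecI)
  let ?B = "std_basis lt K" and ?n = "length (std_basis lt K)"
  show "dim_vec (mult_matrix lt K v *\<^sub>v coord_vec lt K p) = dim_vec (coord_vec lt K (p * mvar v))"
    by (simp add: cv_dim mm_dim_row)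
  fix i assume "i < dim_vec (coord_vec lt K (p * mvar v))"
  then have i: "i < ?n" by (simp add: cv_dim)
  let ?c = "\<lambda>j. Poly_Mapping.lookup (normal_form lt K p) (?B ! j)"
  have "(mult_matrix lt K v *\<^sub>v coord_vec lt K p) $ i
      = (\<Sum>j\<in>{0..<?n}. Poly_Mapping.lookup (normal_form lt K (mmonom (?B ! j) * mvar v)) (?B ! i) * ?c j)"
    using i unfolding mult_matrix_def by (simp add: Let_def scalar_prod_def cv_dim cv_idx)
  also have "\<dots> = (\<Sum>j<?n. ?c j * Poly_Mapping.lookup (normal_form lt K (Poly_Mapping.single (?B ! j) 1 * mvar v)) (?B ! i))"
    by (simp add: mmonom_def atLeast0LessThan mult.commute)
  also have "\<dots> = Poly_Mapping.lookup (normal_form lt K (\<Sum>j<?n. Poly_Mapping.single 0 (?c j) * (Poly_Mapping.single (?B ! j) 1 * mvar v))) (?B ! i)"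
    by (rule lookup_nf_lin[OF TO ID, symmetric]) simp
  also have "(\<Sum>j<?n. Poly_Mapping.single 0 (?c j) * (Poly_Mapping.single (?B ! j) 1 * mvar v)) = normal_form lt K p * mvar v"
    by (subst nf_basis) (simp add: sum_distrib_right mult.assoc)
  also have "normal_form lt K (normal_form lt K p * mvar v) = normal_form lt K (p * mvar v)"
  proof (rule nf_cong[OF TO ID])
    have "normal_form lt K p * mvar v - p * mvar v = - ((p - normal_form lt K p) * mvar v)" by (simp add: algebra_simps)
    then show "normal_form lt K p * mvar v - p * mvar v \<in> K"
      using ideal_uminus[OF ID ideal_multr[OF ID nf_diff[OF TO ID, of p]]] by (simp only:)
  qed
  finally show "(mult_matrix lt K v *\<^sub>v coord_vec lt K p) $ i = coord_vec lt K (p * mvar v) $ i"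
    using i by (simp add: cv_idx)
qed

lemma mm_pow: "(mult_matrix lt K v ^\<^sub>m k) *\<^sub>v coord_vec lt K p = coord_vec lt K (p * mvar v ^ k)"
proof (induction k arbitrary: p)
  case 0
  then show ?case using cv_carrier by (simp add: mm_dim_row)
next
  case (Suc k)
  have "(mult_matrix lt K v ^\<^sub>m Suc k) *\<^sub>v coord_vec lt K p
      = (mult_matrix lt K v ^\<^sub>m k) *\<^sub>v (mult_matrix lt K v *\<^sub>v coord_vec lt K p)"
    by (simp only: pow_mat.simps) (rule assoc_mult_mat_vec[OF pow_carrier_mat[OF mm_carrier] mm_carrier cv_carrier])
  also have "\<dots> = coord_vec lt K (p * mvar v ^ Suc k)" by (simp add: mm_mult Suc mult.assoc)
  finally show ?case .
qed

end



lemma mvar_pow: "(mvar v :: ('v, 'k::comm_ring_1) mpoly) ^ k = Poly_Mapping.single (Poly_Mapping.single v k) 1"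
proof (induction k)
  case 0 then show ?case by simp
next
  case (Suc k)
  have "Poly_Mapping.single v (Suc k) = Poly_Mapping.single v 1 + Poly_Mapping.single v k"
    by (simp flip: single_add)
  then show ?case using Suc by (simp add: mvar_def mult_single)
qed

abbreviation X1 :: "('v::{finite,linorder}, 'k::comm_ring_1) mpoly" where "X1 \<equiv> mvar x1"

lemma in_x1_alt:
  assumes "degree f \<le> N"
  shows "(in_x1 f :: ('v::{finite,linorder}, 'k::comm_ring_1) mpoly) = (\<Sum>k\<le>N. Poly_Mapping.single 0 (coeff f k) * X1 ^ k)"
proof -
  have "(in_x1 f :: ('v, 'k) mpoly) = (\<Sum>k\<le>degree f. Poly_Mapping.single 0 (coeff f k) * X1 ^ k)"
    unfolding in_x1_def by (simp add: mvar_pow mult_single)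
  also have "\<dots> = (\<Sum>k\<le>N. Poly_Mapping.single 0 (coeff f k) * X1 ^ k)"
    by (rule sum.mono_neutral_left) (use assms in \<open>auto simp: coeff_eq_0\<close>)
  finally show ?thesis .
qed

lemma in_x1_add: "(in_x1 (f + g) :: ('v::{finite,linorder}, 'k::comm_ring_1) mpoly) = in_x1 f + in_x1 g"
proof -
  let ?N = "max (degree f) (degree g)"
  have d: "degree (f + g) \<le> ?N" by (rule degree_add_le) auto
  have ef: "(in_x1 f :: ('v, 'k) mpoly) = (\<Sum>k\<le>?N. Poly_Mapping.single 0 (coeff f k) * X1 ^ k)"
    by (rule in_x1_alt) simp
  have eg: "(in_x1 g :: ('v, 'k) mpoly) = (\<Sum>k\<le>?N. Poly_Mapping.single 0 (coeff g k) * X1 ^ k)"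
    by (rule in_x1_alt) simp
  have "(in_x1 (f + g) :: ('v, 'k) mpoly) = (\<Sum>k\<le>?N. Poly_Mapping.single 0 (coeff (f + g) k) * X1 ^ k)"
    by (rule in_x1_alt[OF d])
  also have "\<dots> = (\<Sum>k\<le>?N. Poly_Mapping.single 0 (coeff f k) * X1 ^ k) + (\<Sum>k\<le>?N. Poly_Mapping.single 0 (coeff g k) * X1 ^ k)"
    by (simp add: sum.distrib single_add distrib_right)
  also have "\<dots> = in_x1 f + in_x1 g" by (simp only: ef eg)
  finally show ?thesis .
qed

lemma single0_mult: "Poly_Mapping.single 0 (a * b) = Poly_Mapping.single 0 a * (Poly_Mapping.single 0 b :: ('a::comm_monoid_add \<Rightarrow>\<^sub>0 'b::semiring_0))"
  by (simp add: mult_single)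

lemma in_x1_smult: "(in_x1 (smult a f) :: ('v::{finite,linorder}, 'k::comm_ring_1) mpoly) = Poly_Mapping.single 0 a * in_x1 f"
proof -
  have ef: "(in_x1 f :: ('v, 'k) mpoly) = (\<Sum>k\<le>degree f. Poly_Mapping.single 0 (coeff f k) * X1 ^ k)"
    by (rule in_x1_alt) simp
  have "(in_x1 (smult a f) :: ('v, 'k) mpoly) = (\<Sum>k\<le>degree f. Poly_Mapping.single 0 (coeff (smult a f) k) * X1 ^ k)"
    by (rule in_x1_alt[OF degree_smult_le])
  also have "\<dots> = Poly_Mapping.single 0 a * (\<Sum>k\<le>degree f. Poly_Mapping.single 0 (coeff f k) * X1 ^ k)"
    by (simp add: sum_distrib_left single0_mult mult.assoc)
  also have "\<dots> = Poly_Mapping.single 0 a * in_x1 f" by (simp only: ef)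
  finally show ?thesis .
qed

lemma in_x1_pCons0: "(in_x1 (pCons 0 f) :: ('v::{finite,linorder}, 'k::comm_ring_1) mpoly) = X1 * in_x1 f"
proof -
  have ef: "(in_x1 f :: ('v, 'k) mpoly) = (\<Sum>k\<le>degree f. Poly_Mapping.single 0 (coeff f k) * X1 ^ k)"
    by (rule in_x1_alt) simp
  have "(in_x1 (pCons 0 f) :: ('v, 'k) mpoly) = (\<Sum>k\<le>Suc (degree f). Poly_Mapping.single 0 (coeff (pCons 0 f) k) * X1 ^ k)"
    by (rule in_x1_alt) (rule degree_pCons_le)
  also have "\<dots> = (\<Sum>k\<le>degree f. Poly_Mapping.single 0 (coeff f k) * X1 ^ Suc k)"
    by (subst sum.atMost_Suc_shift) simp
  also have "\<dots> = X1 * (\<Sum>k\<le>degree f. Poly_Mapping.single 0 (coeff f k) * X1 ^ k)"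
    by (simp add: sum_distrib_left mult.left_commute)
  also have "\<dots> = X1 * in_x1 f" by (simp only: ef)
  finally show ?thesis .
qed

lemma in_x1_const: "(in_x1 [:c:] :: ('v::{finite,linorder}, 'k::comm_ring_1) mpoly) = Poly_Mapping.single 0 c"
  using in_x1_alt[of "[:c:]" 0] by simp

lemma in_x1_zero: "(in_x1 0 :: ('v::{finite,linorder}, 'k::comm_ring_1) mpoly) = 0"
  using in_x1_const[of 0] by simp

lemma in_x1_pCons: "(in_x1 (pCons a p) :: ('v::{finite,linorder}, 'k::comm_ring_1) mpoly) = Poly_Mapping.single 0 a + X1 * in_x1 p"
proof -
  have "pCons a p = [:a:] + pCons 0 p" by simp
  then show ?thesis by (simp only: in_x1_add in_x1_const in_x1_pCons0)
qed

lemma in_x1_mult: "(in_x1 (p * q) :: ('v::{finite,linorder}, 'k::comm_ring_1) mpoly) = in_x1 p * in_x1 q"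
proof (induction p)
  case 0 then show ?case by (simp add: in_x1_zero)
next
  case (pCons a p)
  have "(in_x1 (pCons a p * q) :: ('v, 'k) mpoly) = in_x1 (smult a q + pCons 0 (p * q))" by simp
  also have "\<dots> = Poly_Mapping.single 0 a * in_x1 q + X1 * (in_x1 p * in_x1 q)"
    by (simp only: in_x1_add in_x1_smult in_x1_pCons0 pCons.IH)
  also have "\<dots> = in_x1 (pCons a p) * in_x1 q"
    by (simp add: in_x1_pCons algebra_simps)
  finally show ?case .
qed

lemma in_x1_X: "(in_x1 [:0, 1:] :: ('v::{finite,linorder}, 'k::comm_ring_1) mpoly) = X1"
  by (simp add: in_x1_pCons0 in_x1_const)

lemma gen_in: "g \<in> S \<Longrightarrow> g \<in> ideal_gen S"
  unfolding ideal_gen_def by (intro CollectI exI[of _ "{g}"] exI[of _ "\<lambda>_. 1"]) simp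

lemma monom_decomp_vars: "m = (\<Sum>v\<in>(UNIV::'v::finite set). Poly_Mapping.single v (Poly_Mapping.lookup m v))"
  by (rule poly_mapping_eqI) (simp add: lookup_sum lookup_single when_def)

context
  fixes I :: "('v::{finite,linorder}, 'k::field) mpoly set"
  assumes SP: "shape_position I" and IDI: "is_ideal I"
begin

definition R :: "('v, 'k) mpoly set" where "R = {h. \<exists>r. h - in_x1 r \<in> I}"

lemma R_add: "a \<in> R \<Longrightarrow> b \<in> R \<Longrightarrow> a + b \<in> R"
proof -
  assume "a \<in> R" "b \<in> R"
  then obtain ra rb where "a - in_x1 ra \<in> I" "b - in_x1 rb \<in> I" unfolding R_def by blast
  then have "(a - in_x1 ra) + (b - in_x1 rb) \<in> I" by (rule ideal_add[OF IDI])
  moreover have "(a - in_x1 ra) + (b - in_x1 rb) = a + b - in_x1 (ra + rb)" by (simp add: in_x1_add)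
  ultimately show ?thesis unfolding R_def by auto
qed

lemma R_mult: "a \<in> R \<Longrightarrow> b \<in> R \<Longrightarrow> a * b \<in> R"
proof -
  assume "a \<in> R" "b \<in> R"
  then obtain ra rb where A: "a - in_x1 ra \<in> I" and B: "b - in_x1 rb \<in> I" unfolding R_def by blast
  have "(a - in_x1 ra) * b + in_x1 ra * (b - in_x1 rb) \<in> I"
    by (rule ideal_add[OF IDI ideal_multr[OF IDI A] ideal_multl[OF IDI B]])
  moreover have "(a - in_x1 ra) * b + in_x1 ra * (b - in_x1 rb) = a * b - in_x1 (ra * rb)"
    by (simp add: in_x1_mult algebra_simps)
  ultimately show ?thesis unfolding R_def by auto
qed

lemma R_const: "Poly_Mapping.single 0 c \<in> R"
  unfolding R_def using ideal_zero[OF IDI] by (intro CollectI exI[of _ "[:c:]"]) (simp add: in_x1_const)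

lemma R_var: "mvar v \<in> R"
proof -
  obtain f1 fs where I: "I = ideal_gen (insert (in_x1 f1) {mvar v - in_x1 (fs v) | v. v \<noteq> x1})"
    using SP unfolding shape_position_def by blast
  show ?thesis
  proof (cases "v = x1")
    case True
    then show ?thesis unfolding R_def using ideal_zero[OF IDI]
      by (intro CollectI exI[of _ "[:0, 1:]"]) (simp add: in_x1_X)
  next
    case False
    then have "mvar v - in_x1 (fs v) \<in> I" unfolding I by (intro gen_in) blast
    then show ?thesis unfolding R_def by blast
  qed
qed

lemma R_pow: "a \<in> R \<Longrightarrow> a ^ k \<in> R"
  by (induction k) (auto intro: R_mult simp: R_const[of 1, simplified])

lemma R_sum: "finite F \<Longrightarrow> (\<And>x. x \<in> F \<Longrightarrow> f x \<in> R) \<Longrightarrow> sum f F \<in> R"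
proof (induction F rule: finite_induct)
  case empty then show ?case using R_const[of 0] by simp
next
  case (insert x F) then show ?case using R_add by simp
qed

lemma R_monom_aux: "finite V \<Longrightarrow> Poly_Mapping.single (\<Sum>v\<in>V. Poly_Mapping.single v (Poly_Mapping.lookup m v)) 1 \<in> R"
proof (induction V rule: finite_induct)
  case empty then show ?case using R_const[of 1] by simp
next
  case (insert x F)
  have "Poly_Mapping.single (\<Sum>v\<in>insert x F. Poly_Mapping.single v (Poly_Mapping.lookup m v)) (1::'k)
     = mvar x ^ Poly_Mapping.lookup m x * Poly_Mapping.single (\<Sum>v\<in>F. Poly_Mapping.single v (Poly_Mapping.lookup m v)) 1"
    using insert(1,2) by (simp add: mvar_pow mult_single)
  then show ?case using R_mult[OF R_pow[OF R_var] insert(3)] by simp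
qed

lemma R_all: "h \<in> R"
proof -
  have mon: "Poly_Mapping.single m 1 \<in> R" for m
    using R_monom_aux[of UNIV m] monom_decomp_vars[of m, symmetric] by simp
  have "h = (\<Sum>m\<in>Poly_Mapping.keys h. Poly_Mapping.single 0 (Poly_Mapping.lookup h m) * Poly_Mapping.single m 1)"
    using poly_decomp[of h] by (simp add: mult_single)
  also have "\<dots> \<in> R" by (intro R_sum R_mult R_const mon) auto
  finally show ?thesis .
qed

lemma shape_rep: "\<exists>r. h - in_x1 r \<in> I"
  using R_all[of h] unfolding R_def by blast

end



context
  fixes lt :: "('v::{finite,linorder}) monom \<Rightarrow> 'v monom \<Rightarrow> bool"
    and K :: "('v, 'k::field) mpoly set"
  assumes TO: "term_order lt" and ID: "is_ideal K" and FIN: "finite (std_monoms lt K)" and ONE: "1 \<notin> K"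
begin

lemma zero_std: "0 \<in> std_monoms lt K"
proof (rule ccontr)
  assume "0 \<notin> std_monoms lt K"
  then obtain p where p: "p \<in> K" "p \<noteq> 0" "lmon lt p = 0" unfolding std_monoms_def by blast
  have keys: "Poly_Mapping.keys p \<subseteq> {0}"
  proof
    fix m assume m: "m \<in> Poly_Mapping.keys p"
    have "m = 0"
    proof (rule ccontr)
      assume "m \<noteq> 0"
      then have "lt 0 m" using to_zero[OF TO] by blast
      moreover have "m = 0 \<or> lt m 0" using lmon_prop[OF TO p(2)] p(3) m by auto
      ultimately show False using \<open>m \<noteq> 0\<close> to_asym[OF TO] by blast
    qed
    then show "m \<in> {0}" by simp
  qed
  define c where "c = Poly_Mapping.lookup p 0"
  have "0 \<in> Poly_Mapping.keys p" using lmon_prop[OF TO p(2)] p(3) by auto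
  then have c0: "c \<noteq> 0" unfolding c_def by (simp add: in_keys_iff)
  have "p = (\<Sum>m\<in>Poly_Mapping.keys p. Poly_Mapping.single m (Poly_Mapping.lookup p m))" by (rule poly_decomp)
  also have "\<dots> = Poly_Mapping.single 0 c" using keys \<open>0 \<in> Poly_Mapping.keys p\<close> unfolding c_def
    by (subgoal_tac "Poly_Mapping.keys p = {0}") auto
  finally have pc: "p = Poly_Mapping.single 0 c" .
  have "Poly_Mapping.single 0 (1 / c) * p \<in> K" using ideal_multl[OF ID p(1)] .
  then have "1 \<in> K" using c0 pc by (simp add: mult_single)
  then show False using ONE by blast
qed

lemma sb_nth0: "std_basis lt K ! 0 = 0" and sb_pos: "0 < length (std_basis lt K)"
proof -
  have "0 \<in> set (std_basis lt K)" using zero_std sb_set[OF TO ID FIN] by simp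
  then obtain j where j: "j < length (std_basis lt K)" "std_basis lt K ! j = 0" by (auto simp: in_set_conv_nth)
  then show "0 < length (std_basis lt K)" by linarith
  show "std_basis lt K ! 0 = 0"
  proof (rule ccontr)
    assume ne: "std_basis lt K ! 0 \<noteq> 0"
    have "j \<noteq> 0"
    proof
      assume "j = 0" then show False using ne j(2) by simp
    qed
    then have j0: "0 < j" by simp
    have "lt (std_basis lt K ! 0) (std_basis lt K ! j)"
      by (rule sorted_wrt_nth_less[OF sb_sorted[OF TO ID FIN] j0 j(1)])
    then have "lt (std_basis lt K ! 0) 0" using j by simp
    moreover have "lt 0 (std_basis lt K ! 0)" using to_zero[OF TO ne] .
    ultimately show False using to_asym[OF TO] by blast
  qed
qed

lemma nf_one: "normal_form lt K 1 = 1"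
  by (rule nf_eqI[OF TO ID]) (use zero_std ideal_zero[OF ID] in auto)

lemma cv_one: "coord_vec lt K 1 = unit_vec (length (std_basis lt K)) 0"
proof (rule eq_vecI)
  show "dim_vec (coord_vec lt K 1) = dim_vec (unit_vec (length (std_basis lt K)) 0)"
    by (simp add: cv_dim[OF TO ID FIN])
  fix i assume "i < dim_vec (unit_vec (length (std_basis lt K)) 0)"
  then have i: "i < length (std_basis lt K)" by simp
  have "std_basis lt K ! i = 0 \<longleftrightarrow> i = 0"
    using nth_eq_iff_index_eq[OF sb_distinct[OF TO ID FIN] i sb_pos] sb_nth0 by simp
  then show "coord_vec lt K 1 $ i = unit_vec (length (std_basis lt K)) 0 $ i"
    using i sb_pos by (simp add: cv_idx[OF TO ID FIN] nf_one lookup_one when_def)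
qed

end



theorem lemma3p5:
  fixes lt :: "('v::{finite,linorder}) monom \<Rightarrow> 'v monom \<Rightarrow> bool"
    and I :: "('v, 'k::field) mpoly set"
    and D d :: nat
    and w :: "'k vec"
    and f1t :: "'k poly"
  assumes "term_order lt"
    and "zero_dimensional lt I"
    and "D = card (std_monoms lt I)"
    and "shape_position I"
    and "det (mult_matrix lt I x1) \<noteq> 0"
    and "w \<in> carrier_vec D"
    and "is_min_poly_seq
           (\<lambda>i. w \<bullet> ((mult_matrix lt I x1 ^\<^sub>m i) *\<^sub>v unit_vec D 0)) f1t"
    and "degree f1t = d"
  shows "is_min_poly_vec (mult_matrix lt (ideal_plus I (in_x1 f1t)) x1)
           (coord_vec lt (ideal_plus I (in_x1 f1t)) 1) f1t"
proof -
  note TO = assms(1)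
  have IDI: "is_ideal I" and ONEI: "1 \<notin> I" and FINI: "finite (std_monoms lt I)"
    using assms(2) unfolding zero_dimensional_def by auto
  define G :: "('v, 'k) mpoly" where "G = in_x1 f1t"
  define J where "J = ideal_plus I G"
  have IDJ: "is_ideal J"
    unfolding is_ideal_def
  proof (intro conjI ballI allI)
    show "0 \<in> J" unfolding J_def ideal_plus_def using ideal_zero[OF IDI]
      by (intro CollectI exI[of _ 0]) simp
  next
    fix a b assume "a \<in> J" "b \<in> J"
    then obtain a1 h1 a2 h2 where "a = a1 + h1 * G" "a1 \<in> I" "b = a2 + h2 * G" "a2 \<in> I"
      unfolding J_def ideal_plus_def by blast
    then show "a + b \<in> J" unfolding J_def ideal_plus_def using ideal_add[OF IDI, of a1 a2]
      by (intro CollectI exI[of _ "a1 + a2"] exI[of _ "h1 + h2"]) (simp add: algebra_simps)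
  next
    fix a g assume "a \<in> J"
    then obtain a1 h1 where "a = a1 + h1 * G" "a1 \<in> I" unfolding J_def ideal_plus_def by blast
    then show "g * a \<in> J" unfolding J_def ideal_plus_def using ideal_multl[OF IDI, of a1 g]
      by (intro CollectI exI[of _ "g * a1"] exI[of _ "g * h1"]) (simp add: algebra_simps)
  qed
  have IJ: "I \<subseteq> J"
  proof
    fix x assume x: "x \<in> I"
    have "x = x + 0 * G" by simp
    then show "x \<in> J" unfolding J_def ideal_plus_def using x by blast
  qed
  have "std_monoms lt J \<subseteq> std_monoms lt I" unfolding std_monoms_def using IJ by blast
  then have FINJ: "finite (std_monoms lt J)" using FINI finite_subset by blast
  define T where "T = mult_matrix lt I x1"
  define B where "B = std_basis lt I"
  have DB: "length B = D" unfolding B_def using sb_length[OF TO IDI FINI] assms(3) by simp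
  define s where "s = (\<lambda>i. w \<bullet> ((T ^\<^sub>m i) *\<^sub>v unit_vec D 0))"
  have minp: "is_min_poly_seq s f1t" using assms(7) unfolding s_def T_def .
  define L where "L = (\<lambda>p. w \<bullet> coord_vec lt I p)"
  have s_eq: "s j = L (X1 ^ j)" for j
  proof -
    have "unit_vec D 0 = coord_vec lt I 1" using cv_one[OF TO IDI FINI ONEI] DB unfolding B_def by simp
    then show ?thesis unfolding s_def L_def T_def using mm_pow[OF TO IDI FINI, of x1 j 1] by simp
  qed
  have L_expand: "L p = (\<Sum>i<D. w $ i * Poly_Mapping.lookup (normal_form lt I p) (B ! i))" for p
  proof -
    have "L p = (\<Sum>i\<in>{0..<D}. w $ i * coord_vec lt I p $ i)"
      unfolding L_def scalar_prod_def using cv_dim[OF TO IDI FINI, of p] DB unfolding B_def by simp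
    also have "\<dots> = (\<Sum>i<D. w $ i * Poly_Mapping.lookup (normal_form lt I p) (B ! i))"
      unfolding atLeast0LessThan
      by (rule sum.cong) (use DB cv_idx[OF TO IDI FINI] in \<open>auto simp: B_def\<close>)
    finally show ?thesis .
  qed
  have L_lin: "L (\<Sum>x\<in>F. Poly_Mapping.single 0 (c x) * P x) = (\<Sum>x\<in>F. c x * L (P x))" if "finite F" for F c P
  proof -
    have "L (\<Sum>x\<in>F. Poly_Mapping.single 0 (c x) * P x)
        = (\<Sum>i<D. w $ i * (\<Sum>x\<in>F. c x * Poly_Mapping.lookup (normal_form lt I (P x)) (B ! i)))"
      unfolding L_expand using lookup_nf_lin[OF TO IDI that] by simp
    also have "\<dots> = (\<Sum>i<D. \<Sum>x\<in>F. c x * (w $ i * Poly_Mapping.lookup (normal_form lt I (P x)) (B ! i)))"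
      by (simp add: sum_distrib_left mult.left_commute)
    also have "\<dots> = (\<Sum>x\<in>F. \<Sum>i<D. c x * (w $ i * Poly_Mapping.lookup (normal_form lt I (P x)) (B ! i)))"
      by (rule sum.swap)
    also have "\<dots> = (\<Sum>x\<in>F. c x * L (P x))"
      unfolding L_expand by (simp add: sum_distrib_left)
    finally show ?thesis .
  qed
  have L_cong: "L a = L b" if "a - b \<in> I" for a b
    unfolding L_def coord_vec_def using nf_cong[OF TO IDI that] by simp
  have Lx: "L (X1 ^ i * in_x1 g) = (\<Sum>k\<le>degree g. coeff g k * s (i + k))" for i g
  proof -
    have "(X1 ^ i * in_x1 g :: ('v, 'k) mpoly) = X1 ^ i * (\<Sum>k\<le>degree g. Poly_Mapping.single 0 (coeff g k) * X1 ^ k)"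
      by (subst in_x1_alt[OF order_refl]) (rule refl)
    also have "\<dots> = (\<Sum>k\<le>degree g. Poly_Mapping.single 0 (coeff g k) * X1 ^ (i + k))"
      by (simp add: sum_distrib_left power_add mult.left_commute)
    finally have "L (X1 ^ i * in_x1 g) = L (\<Sum>k\<le>degree g. Poly_Mapping.single 0 (coeff g k) * X1 ^ (i + k))"
      by simp
    also have "\<dots> = (\<Sum>k\<le>degree g. coeff g k * L (X1 ^ (i + k)))" by (rule L_lin) simp
    finally show ?thesis by (simp add: s_eq)
  qed
  have charf: "char_poly_seq f1t s" using minp unfolding is_min_poly_seq_def by simp
  have key: "f1t dvd q" if qJ: "in_x1 q \<in> J" for q
  proof -
    obtain a h where ah: "in_x1 q = a + h * G" "a \<in> I" using qJ unfolding J_def ideal_plus_def by blast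
    have "char_poly_seq q s" unfolding char_poly_seq_def
    proof
      fix i
      obtain r where r: "X1 ^ i * h - in_x1 r \<in> I" using shape_rep[OF assms(4) IDI] by blast
      have "(\<Sum>k\<le>degree q. coeff q k * s (i + k)) = L (X1 ^ i * in_x1 q)" by (simp add: Lx)
      also have "\<dots> = L (X1 ^ i * h * G)"
      proof (rule L_cong)
        have "X1 ^ i * in_x1 q - X1 ^ i * h * G = X1 ^ i * a" using ah(1) by (simp add: algebra_simps)
        then show "X1 ^ i * in_x1 q - X1 ^ i * h * G \<in> I" using ideal_multl[OF IDI ah(2)] by (simp only:)
      qed
      also have "\<dots> = L (in_x1 r * G)"
      proof (rule L_cong)
        have "X1 ^ i * h * G - in_x1 r * G = (X1 ^ i * h - in_x1 r) * G" by (simp add: algebra_simps)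
        then show "X1 ^ i * h * G - in_x1 r * G \<in> I" using ideal_multr[OF IDI r] by (simp only:)
      qed
      also have "in_x1 r * G = (\<Sum>j\<le>degree r. Poly_Mapping.single 0 (coeff r j) * (X1 ^ j * G))"
        by (subst in_x1_alt[OF order_refl]) (simp add: sum_distrib_right mult.assoc)
      also have "L \<dots> = (\<Sum>j\<le>degree r. coeff r j * L (X1 ^ j * G))" by (rule L_lin) simp
      also have "\<dots> = 0"
      proof (rule sum.neutral, rule ballI)
        fix j
        have "L (X1 ^ j * G) = (\<Sum>k\<le>degree f1t. coeff f1t k * s (j + k))" unfolding G_def by (rule Lx)
        also have "\<dots> = 0" using charf unfolding char_poly_seq_def by blast
        finally show "coeff r j * L (X1 ^ j * G) = 0" by simp
      qed
      finally show "(\<Sum>k\<le>degree q. coeff q k * s (i + k)) = 0" .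
    qed
    then show ?thesis using minp unfolding is_min_poly_seq_def by blast
  qed
  have conv: "in_x1 q \<in> J" if dvq: "f1t dvd q" for q
  proof -
    obtain r where "q = f1t * r" using dvq by (auto elim: dvdE)
    then have "in_x1 q = 0 + in_x1 r * G" unfolding G_def by (simp add: in_x1_mult mult.commute)
    then show ?thesis unfolding J_def ideal_plus_def using ideal_zero[OF IDI] by blast
  qed
  define A where "A = mult_matrix lt J x1"
  define v where "v = coord_vec lt J 1"
  define n where "n = length (std_basis lt J)"
  have dv: "dim_vec v = n" unfolding v_def n_def by (rule cv_dim[OF TO IDJ FINJ])
  have PMV: "poly_mat_vec q A v = coord_vec lt J (in_x1 q)" for q
  proof (rule eq_vecI)
    show "dim_vec (poly_mat_vec q A v) = dim_vec (coord_vec lt J (in_x1 q))"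
      unfolding poly_mat_vec_def using dv cv_dim[OF TO IDJ FINJ] n_def by simp
    fix i assume "i < dim_vec (coord_vec lt J (in_x1 q))"
    then have i: "i < n" using cv_dim[OF TO IDJ FINJ] n_def by simp
    have "poly_mat_vec q A v $ i = (\<Sum>k\<le>degree q. coeff q k * ((A ^\<^sub>m k) *\<^sub>v v) $ i)"
      unfolding poly_mat_vec_def using i dv by simp
    also have "\<dots> = (\<Sum>k\<le>degree q. coeff q k * Poly_Mapping.lookup (normal_form lt J (X1 ^ k)) (std_basis lt J ! i))"
      unfolding A_def v_def using mm_pow[OF TO IDJ FINJ, of x1 _ 1] cv_idx[OF TO IDJ FINJ] i n_def by simp
    also have "\<dots> = Poly_Mapping.lookup (normal_form lt J (\<Sum>k\<le>degree q. Poly_Mapping.single 0 (coeff q k) * X1 ^ k)) (std_basis lt J ! i)"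
      by (rule lookup_nf_lin[OF TO IDJ, symmetric]) simp
    also have "\<dots> = coord_vec lt J (in_x1 q) $ i"
      by (subst in_x1_alt[OF order_refl, of q]) (use cv_idx[OF TO IDJ FINJ] i n_def in simp)
    finally show "poly_mat_vec q A v $ i = coord_vec lt J (in_x1 q) $ i" .
  qed
  have zero_iff: "poly_mat_vec q A v = 0\<^sub>v (dim_vec v) \<longleftrightarrow> f1t dvd q" for q
    using PMV[of q] cv_zero_iff[OF TO IDJ FINJ, of "in_x1 q"] dv n_def key conv by auto
  have lc: "lead_coeff f1t = 1" using minp unfolding is_min_poly_seq_def by simp
  have "is_min_poly_vec A v f1t"
    unfolding is_min_poly_vec_def
  proof (intro conjI allI impI)
    show "lead_coeff f1t = 1" by (rule lc)
    show "poly_mat_vec f1t A v = 0\<^sub>v (dim_vec v)" using zero_iff by simp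
    fix q assume "lead_coeff q = 1" "poly_mat_vec q A v = 0\<^sub>v (dim_vec v)"
    then have "f1t dvd q" "q \<noteq> 0" using zero_iff by auto
    then show "degree f1t \<le> degree q" by (rule dvd_imp_degree_le)
  qed
  then show ?thesis unfolding A_def v_def J_def G_def .
qed


end
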